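(* Let $1<p<\infty$, $\frac1p+\frac1q=1$, let $a,b$ be as in the context, and let $w=(w_n)_{n\ge0}$ be nonzero complex numbers with $$\sup_{n\ge0}\Big|\frac{w_na_n}{a_{n+1}}\Big|<\infty\quad\text{and}\quad\limsup_{n\to\infty}\Big|\frac{b_n}{a_{n+1}}\Big|<1 .$$ Identify $(\ell^p_{a,b})^*$ with $\ell^q(\mathbb{N}_0)$ via $L\mapsto(L(f_n))_{n\ge0}$. Then the following are equivalent: (i) $F_w^*$ is not hypercyclic on $(\ell^p_{a,b})^*$; (ii) for every $L\in(\ell^p_{a,b})^*$ (equivalently every $u\in\ell^q(\mathbb{N}_0)$) the sequence $\big((F_w^* )^\nu L\big)(f_n)=L(F_w^\nu f_n)$, i.e. the image of $u$ under the $\nu$-th power of the matrix of $F_w^*$ with respect to $\{f_n^*\}$, tends to $0$ in $\mathbb{C}^{\mathbb{N}_0}$ (coordinatewise) as $\nu\to\infty$; that is, $L(F_w^\nu f_n)\to0$ as $\nu\to\infty$ for every $n\ge0$.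
   Context: Let $a=(a_n)_{n\ge0}$, $b=(b_n)_{n\ge0}$ be sequences of nonzero complex numbers with $\limsup_{n\to\infty}(|a_n|+|b_n|)^{1/n}<\infty$, and let $R=1/\limsup_{n}(|a_n|+|b_n|)^{1/n}\in(0,\infty]$. For $n\ge0$ let $f_n(z)=(a_n+b_nz)z^n$. For $1\le p<\infty$, $\ell^p_{a,b}$ is the space of analytic functions on $\{|z|<R\}$ of the form $f=\sum_{n\ge0}\lambda_nf_n$ with $(\lambda_n)\in\ell^p(\mathbb{N}_0)$ (the series converges locally uniformly on $\{|z|<R\}$ and the $\lambda_n$ are uniquely determined by $f$), normed by $\|f\|=(\sum_n|\lambda_n|^p)^{1/p}$. $f_n^*$ are the coordinate functionals $f_n^*(\sum_j\lambda_jf_j)=\lambda_n$. The weighted forward shift is $F_w\big(\sum_{n\ge0}\mu_nz^n\big)=\sum_{n\ge0}\mu_nw_nz^{n+1}$ (bounded on $\ell^p_{a,b}$ under the hypotheses); $F_w^*$ is its adjoint. $\mathbb{C}^{\mathbb{N}_0}$ carries the topology of coordinatewise convergence. Hypercyclic means having a dense orbit. *)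

theory Defs
  imports "HOL-Analysis.Analysis" "HOL-Library.Liminf_Limsup"
begin

text \<open>Elements of the space of analytic functions are represented by their
Taylor coefficient sequences (an analytic function on a disc is determined by
them).  Taylor coefficients of f_n = (a_n + b_n z) z^n:\<close>
definition fcoef :: "(nat \<Rightarrow> complex) \<Rightarrow> (nat \<Rightarrow> complex) \<Rightarrow> nat \<Rightarrow> nat \<Rightarrow> complex" where
  "fcoef a b n k = (if k = n then a n else if k = Suc n then b n else 0)"

definition Fw :: "(nat \<Rightarrow> complex) \<Rightarrow> (nat \<Rightarrow> complex) \<Rightarrow> nat \<Rightarrow> complex" where
  "Fw w \<mu> k = (if k = 0 then 0 else \<mu> (k - 1) * w (k - 1))"

text \<open>Coordinates lambda_n = f_n^*(f) of the function with Taylor coefficients mu: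
  mu_n = lambda_n a_n + lambda_(n-1) b_(n-1) determines lambda uniquely.\<close>
primrec abcoord :: "(nat \<Rightarrow> complex) \<Rightarrow> (nat \<Rightarrow> complex) \<Rightarrow> (nat \<Rightarrow> complex) \<Rightarrow> nat \<Rightarrow> complex" where
  "abcoord a b \<mu> 0 = \<mu> 0 / a 0"
| "abcoord a b \<mu> (Suc n) = (\<mu> (Suc n) - abcoord a b \<mu> n * b n) / a (Suc n)"

text \<open>The functional L_u on l^p_{a,b} corresponding to u in l^q:
  L_u(sum lambda_j f_j) = sum lambda_j u_j, so that L_u(f_n) = u_n.\<close>
definition dualpair :: "(nat \<Rightarrow> complex) \<Rightarrow> (nat \<Rightarrow> complex) \<Rightarrow> (nat \<Rightarrow> complex) \<Rightarrow> (nat \<Rightarrow> complex) \<Rightarrow> complex" where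
  "dualpair a b \<mu> u = (\<Sum>j. abcoord a b \<mu> j * u j)"

text \<open>The adjoint F_w^* transported to l^q: (F_w^* L)(f_n) = L(F_w f_n).\<close>
definition Fw_adj :: "(nat \<Rightarrow> complex) \<Rightarrow> (nat \<Rightarrow> complex) \<Rightarrow> (nat \<Rightarrow> complex) \<Rightarrow> (nat \<Rightarrow> complex) \<Rightarrow> nat \<Rightarrow> complex" where
  "Fw_adj a b w u n = dualpair a b (Fw w (fcoef a b n)) u"

definition in_lq :: "real \<Rightarrow> (nat \<Rightarrow> complex) \<Rightarrow> bool" where
  "in_lq q u \<longleftrightarrow> summable (\<lambda>n. norm (u n) powr q)"

definition lq_norm :: "real \<Rightarrow> (nat \<Rightarrow> complex) \<Rightarrow> real" where
  "lq_norm q u = (\<Sum>n. norm (u n) powr q) powr (1 / q)"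

definition hypercyclic_lq :: "real \<Rightarrow> ((nat \<Rightarrow> complex) \<Rightarrow> (nat \<Rightarrow> complex)) \<Rightarrow> bool" where
  "hypercyclic_lq q T \<longleftrightarrow>
     (\<exists>u. in_lq q u \<and> (\<forall>v. in_lq q v \<longrightarrow> (\<forall>\<epsilon>>0. \<exists>\<nu>. lq_norm q ((T ^^ \<nu>) u - v) < \<epsilon>)))"

end

theory Submission
  imports Defs
begin


definition Nq :: "real \<Rightarrow> (nat \<Rightarrow> complex) \<Rightarrow> real" where
  "Nq q x = (\<Sum>n. norm (x n) powr q)"

lemma lq_bound:
  assumes "in_lq q g" "in_lq q h" "A \<ge> 0" "B \<ge> 0"
    and le: "\<And>n. norm (f n) powr q \<le> A * norm (g n) powr q + B * norm (h n) powr q"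
  shows "in_lq q f \<and> Nq q f \<le> A * Nq q g + B * Nq q h"
proof -
  have sg: "summable (\<lambda>n. A * norm (g n) powr q + B * norm (h n) powr q)"
    using assms(1,2) unfolding in_lq_def by (intro summable_add summable_mult)
  have sf: "summable (\<lambda>n. norm (f n) powr q)"
    by (rule summable_comparison_test[OF _ sg]) (use le in auto)
  have "Nq q f \<le> (\<Sum>n. A * norm (g n) powr q + B * norm (h n) powr q)"
    unfolding Nq_def by (rule suminf_le[OF le sf sg])
  also have "\<dots> = A * Nq q g + B * Nq q h"
    using assms(1,2) unfolding in_lq_def Nq_def
    by (subst suminf_add[symmetric]) (auto intro: summable_mult simp: suminf_mult)
  finally show ?thesis using sf unfolding in_lq_def by simp
qed

lemma lq_shift:
  assumes "in_lq q g"
  shows "in_lq q (\<lambda>n. g (n + m)) \<and> Nq q (\<lambda>n. g (n + m)) \<le> Nq q g"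
proof -
  have s: "summable (\<lambda>n. norm (g n) powr q)" using assms unfolding in_lq_def .
  have "Nq q g = (\<Sum>n. norm (g (n+m)) powr q) + (\<Sum>i<m. norm (g i) powr q)"
    unfolding Nq_def by (rule suminf_split_initial_segment[OF s])
  moreover have "(\<Sum>i<m. norm (g i) powr q) \<ge> 0" by (intro sum_nonneg) auto
  ultimately show ?thesis using s unfolding in_lq_def Nq_def
    by (simp add: summable_iff_shift[of "\<lambda>n. norm (g n) powr q"])
qed

lemma powr_add_le:
  fixes s t :: complex assumes "q > 0"
  shows "norm (s + t) powr q \<le> 2 powr q * (norm s powr q + norm t powr q)"
proof -
  have "norm (s+t) \<le> 2 * max (norm s) (norm t)"
    by (smt (verit) norm_triangle_ineq)
  hence "norm (s + t) powr q \<le> (2 * max (norm s) (norm t)) powr q"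
    using assms by (intro powr_mono2) auto
  also have "\<dots> = 2 powr q * max (norm s) (norm t) powr q"
    by (simp add: powr_mult)
  also have "max (norm s) (norm t) powr q \<le> norm s powr q + norm t powr q"
    by (cases "norm s \<le> norm t") (auto simp: max_def)
  finally show ?thesis by (simp add: mult_left_mono)
qed

lemma lq_term_le:
  assumes "in_lq q x" shows "norm (x n) powr q \<le> Nq q x"
proof -
  have "sum (\<lambda>n. norm (x n) powr q) {n} \<le> Nq q x"
    unfolding Nq_def by (rule sum_le_suminf) (use assms in_lq_def in auto)
  thus ?thesis by simp
qed

lemma Nq_nonneg: "in_lq q x \<Longrightarrow> Nq q x \<ge> 0"
  unfolding Nq_def in_lq_def by (intro suminf_nonneg) auto

lemma lq_norm_coord:
  assumes "in_lq q x" "q > 0" shows "norm (x n) \<le> lq_norm q x"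
proof -
  have "norm (x n) = (norm (x n) powr q) powr (1/q)" using assms by (simp add: powr_powr)
  also have "\<dots> \<le> Nq q x powr (1/q)"
    using assms lq_term_le by (intro powr_mono2) auto
  finally show ?thesis unfolding lq_norm_def Nq_def .
qed

lemma lq_norm_less:
  assumes "q > 0" "e > 0" "in_lq q x" "Nq q x < e powr q"
  shows "lq_norm q x < e"
proof -
  have "lq_norm q x = Nq q x powr (1/q)" unfolding lq_norm_def Nq_def ..
  also have "\<dots> < (e powr q) powr (1/q)"
    using assms Nq_nonneg by (intro powr_less_mono2) auto
  also have "\<dots> = e" using assms by (simp add: powr_powr)
  finally show ?thesis .
qed

lemma lq_bounded_partial:
  assumes "\<And>K. (\<Sum>n<K. norm (x n) powr q) \<le> C"
  shows "in_lq q x \<and> Nq q x \<le> C"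
proof -
  have s: "summable (\<lambda>n. norm (x n) powr q)"
    by (rule summableI_nonneg_bounded[OF _ assms]) auto
  thus ?thesis unfolding in_lq_def Nq_def using suminf_le_const[OF s assms] by auto
qed

lemma lq_tendsto0:
  assumes "in_lq q x" "q > 0" shows "x \<longlonglongrightarrow> 0"
proof -
  have "(\<lambda>n. norm (x n) powr q) \<longlonglongrightarrow> 0"
    using assms(1) unfolding in_lq_def by (rule summable_LIMSEQ_zero)
  hence "(\<lambda>n. (norm (x n) powr q) powr (1/q)) \<longlonglongrightarrow> 0 powr (1/q)"
    using assms by (intro tendsto_powr') auto
  moreover have "(\<lambda>n. (norm (x n) powr q) powr (1/q)) = (\<lambda>n. norm (x n))"
    using assms by (simp add: powr_powr)
  ultimately have "(\<lambda>n. norm (x n)) \<longlonglongrightarrow> 0" by simp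
  thus ?thesis by (simp add: tendsto_norm_zero_iff)
qed

lemma lq_finite_support:
  assumes "\<And>n. n \<ge> D \<Longrightarrow> x n = 0" "q > 0"
  shows "in_lq q x \<and> Nq q x = (\<Sum>n<D. norm (x n) powr q)"
proof -
  have z: "\<And>n. n \<notin> {..<D} \<Longrightarrow> norm (x n) powr q = 0" using assms by auto
  have "summable (\<lambda>n. norm (x n) powr q)"
    by (rule summable_finite[of "{..<D}"]) (use z in auto)
  thus ?thesis unfolding in_lq_def Nq_def using suminf_finite[of "{..<D}", OF _ z] by auto
qed



definition gg :: "(nat \<Rightarrow> complex) \<Rightarrow> nat \<Rightarrow> nat \<Rightarrow> complex" where
  "gg c i k = (\<Prod>l<k. - c (i + l))"
definition Qop :: "(nat \<Rightarrow> complex) \<Rightarrow> (nat \<Rightarrow> complex) \<Rightarrow> nat \<Rightarrow> complex" where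
  "Qop c v i = (\<Sum>k. gg c i k * v (i + k))"
definition Pop :: "(nat \<Rightarrow> complex) \<Rightarrow> (nat \<Rightarrow> complex) \<Rightarrow> nat \<Rightarrow> complex" where
  "Pop c v n = v n + c n * v (Suc n)"
definition Bop :: "(nat \<Rightarrow> complex) \<Rightarrow> (nat \<Rightarrow> complex) \<Rightarrow> nat \<Rightarrow> complex" where
  "Bop \<beta> v n = \<beta> n * v (Suc n)"

lemma gg_0[simp]: "gg c i 0 = 1" by (simp add: gg_def)
lemma gg_Suc: "gg c i (Suc k) = - c i * gg c (Suc i) k"
  unfolding gg_def by (subst prod.lessThan_Suc_shift) simp
lemma gg_Suc': "gg c i (Suc k) = gg c i k * (- c (i + k))"
  unfolding gg_def by simp

locale qsetup =
  fixes c \<beta> :: "nat \<Rightarrow> complex" and q r C0 Cc M :: real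
  assumes q: "q > 0" and r: "0 < r" "r < 1" and C0: "C0 \<ge> 0"
    and gbound: "\<And>i k. norm (gg c i k) \<le> C0 * r ^ k"
    and cbound: "\<And>n. norm (c n) \<le> Cc" and Cc: "Cc \<ge> 0"
    and bne: "\<And>n. \<beta> n \<noteq> 0" and bbound: "\<And>n. norm (\<beta> n) \<le> M" and M: "M \<ge> 1"
begin

lemma Q_summable:
  assumes "\<And>n. norm (v n) \<le> V"
  shows "summable (\<lambda>k. norm (gg c i k * v (i + k)))"
proof (rule summable_comparison_test[of _ "\<lambda>k. C0 * V * r ^ k"])
  show "summable (\<lambda>k. C0 * V * r ^ k)" using r by (intro summable_mult summable_geometric) auto
  have V: "V \<ge> 0" by (rule order_trans[OF norm_ge_zero assms])
  show "\<exists>N. \<forall>n\<ge>N. norm (norm (gg c i n * v (i + n))) \<le> C0 * V * r ^ n"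
  proof (intro exI allI impI)
    fix n
    have "norm (gg c i n * v (i + n)) \<le> (C0 * r ^ n) * V"
      unfolding norm_mult by (intro mult_mono gbound assms) (use C0 r in auto)
    thus "norm (norm (gg c i n * v (i + n))) \<le> C0 * V * r ^ n" by (simp add: algebra_simps)
  qed
qed

lemma Q_summable': "(\<And>n. norm (v n) \<le> V) \<Longrightarrow> summable (\<lambda>k. gg c i k * v (i + k))"
  by (rule summable_norm_cancel[OF Q_summable])

lemma Q_rec:
  assumes "\<And>n. norm (v n) \<le> V"
  shows "Qop c v i = v i - c i * Qop c v (Suc i)"
proof -
  have s: "summable (\<lambda>k. gg c i k * v (i + k))" by (rule Q_summable'[OF assms])
  have h1: "(\<Sum>k. gg c i (Suc k) * v (i + Suc k)) = Qop c v i - v i"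
    unfolding Qop_def using suminf_split_head[OF s] by simp
  have h2: "(\<Sum>k. gg c i (Suc k) * v (i + Suc k)) = - c i * Qop c v (Suc i)"
  proof -
    have s2: "summable (\<lambda>k. gg c (Suc i) k * v (Suc i + k))" by (rule Q_summable'[OF assms])
    have "(\<Sum>k. gg c i (Suc k) * v (i + Suc k)) = (\<Sum>k. (- c i) * (gg c (Suc i) k * v (Suc i + k)))"
      unfolding gg_Suc by (simp add: mult.assoc)
    also have "\<dots> = (- c i) * Qop c v (Suc i)" unfolding Qop_def by (rule suminf_mult[OF s2])
    finally show ?thesis .
  qed
  have e: "Qop c v i - v i = - c i * Qop c v (Suc i)" using h1 h2 by (rule trans[OF sym])
  have "Qop c v i = (Qop c v i - v i) + v i" by simp
  also have "\<dots> = v i - c i * Qop c v (Suc i)" unfolding e by simp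
  finally show ?thesis .
qed

lemma PQ:
  assumes "\<And>n. norm (v n) \<le> V"
  shows "Pop c (Qop c v) = v"
proof
  fix n show "Pop c (Qop c v) n = v n" unfolding Pop_def by (subst Q_rec[OF assms, where i=n]) simp
qed

lemma lq_bdd:
  assumes "in_lq q v" shows "\<exists>V. \<forall>n. norm (v n) \<le> V"
proof -
  have "convergent v" using lq_tendsto0[OF assms q] convergent_def by blast
  hence "Bseq v" using convergent_imp_Bseq by blast
  thus ?thesis unfolding Bseq_def by blast
qed

lemma QP:
  assumes "in_lq q z"
  shows "Qop c (Pop c z) = z"
proof
  fix i
  obtain V where V: "\<And>n. norm (z n) \<le> V" using lq_bdd[OF assms] by blast
  have z0: "z \<longlonglongrightarrow> 0" by (rule lq_tendsto0[OF assms q])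
  have "(\<lambda>k. gg c i k * z (i + k)) \<longlonglongrightarrow> 0"
  proof (rule Lim_null_comparison[of _ "\<lambda>k. C0 * V * r ^ k"])
    show "\<forall>\<^sub>F k in sequentially. norm (gg c i k * z (i + k)) \<le> C0 * V * r ^ k"
    proof (intro always_eventually allI)
      fix k
      have "norm (gg c i k * z (i + k)) \<le> (C0 * r ^ k) * V"
        unfolding norm_mult by (intro mult_mono gbound V) (use C0 r in auto)
      thus "norm (gg c i k * z (i + k)) \<le> C0 * V * r ^ k" by (simp add: algebra_simps)
    qed
    show "(\<lambda>k. C0 * V * r ^ k) \<longlonglongrightarrow> 0" using r
      by (intro tendsto_mult_right_zero LIMSEQ_power_zero) auto
  qed
  hence "(\<lambda>k. gg c i k * z (i + k) - gg c i (Suc k) * z (i + Suc k)) sums (gg c i 0 * z (i + 0) - 0)"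
    by (rule telescope_sums')
  moreover have "(\<lambda>k. gg c i k * z (i + k) - gg c i (Suc k) * z (i + Suc k)) = (\<lambda>k. gg c i k * Pop c z (i + k))"
  proof
    fix k
    show "gg c i k * z (i + k) - gg c i (Suc k) * z (i + Suc k) = gg c i k * Pop c z (i + k)"
      unfolding gg_Suc' Pop_def add_Suc_right by (simp add: ring_distribs)
  qed
  ultimately have "(\<lambda>k. gg c i k * Pop c z (i + k)) sums z i" by simp
  thus "Qop c (Pop c z) i = z i" unfolding Qop_def by (rule sums_unique[symmetric])
qed

end


lemma pow_powr: "(t::real) > 0 \<Longrightarrow> (t ^ k) powr q = (t powr q) ^ k"
  by (simp add: powr_realpow[symmetric] powr_powr powr_power mult.commute)

lemma lq_diff:
  assumes "q > 0" "in_lq q x" "in_lq q y"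
  shows "in_lq q (x - y) \<and> Nq q (x - y) \<le> 2 powr q * Nq q x + 2 powr q * Nq q y"
proof (rule lq_bound[OF assms(2,3)])
  fix n show "norm ((x - y) n) powr q \<le> 2 powr q * norm (x n) powr q + 2 powr q * norm (y n) powr q"
    using powr_add_le[OF assms(1), of "x n" "- y n"] by (simp add: algebra_simps)
qed auto

context qsetup begin

lemma P_lq:
  assumes "in_lq q v"
  shows "in_lq q (Pop c v) \<and> Nq q (Pop c v) \<le> (2 powr q * (1 + Cc powr q)) * Nq q v"
proof -
  have sh: "in_lq q (\<lambda>n. v (n + 1)) \<and> Nq q (\<lambda>n. v (n + 1)) \<le> Nq q v" by (rule lq_shift[OF assms])
  have "in_lq q (Pop c v) \<and> Nq q (Pop c v) \<le> 2 powr q * Nq q v + (2 powr q * Cc powr q) * Nq q (\<lambda>n. v (n + 1))"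
  proof (rule lq_bound[OF assms conjunct1[OF sh]])
    fix n
    have "norm (Pop c v n) powr q \<le> 2 powr q * (norm (v n) powr q + norm (c n * v (Suc n)) powr q)"
      unfolding Pop_def by (rule powr_add_le[OF q])
    also have "norm (c n * v (Suc n)) powr q = norm (c n) powr q * norm (v (Suc n)) powr q"
      by (simp add: norm_mult powr_mult)
    also have "\<dots> \<le> Cc powr q * norm (v (Suc n)) powr q"
      by (intro mult_right_mono powr_mono2 cbound) (use q in auto)
    finally show "norm (Pop c v n) powr q \<le> 2 powr q * norm (v n) powr q + (2 powr q * Cc powr q) * norm (v (n + 1)) powr q"
      by (simp add: algebra_simps)
  qed auto
  moreover have "(2 powr q * Cc powr q) * Nq q (\<lambda>n. v (n + 1)) \<le> (2 powr q * Cc powr q) * Nq q v"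
    using sh by (intro mult_left_mono) auto
  ultimately show ?thesis by (simp add: algebra_simps)
qed

lemma B_lq:
  assumes "in_lq q v"
  shows "in_lq q (Bop \<beta> v)"
proof -
  have sh: "in_lq q (\<lambda>n. v (n + 1))" using lq_shift[OF assms] by blast
  have "in_lq q (Bop \<beta> v) \<and> Nq q (Bop \<beta> v) \<le> M powr q * Nq q (\<lambda>n. v (n + 1)) + 0 * Nq q (\<lambda>n. v (n + 1))"
  proof (rule lq_bound[OF sh sh])
    fix n
    have "norm (Bop \<beta> v n) powr q = norm (\<beta> n) powr q * norm (v (Suc n)) powr q"
      by (simp add: Bop_def norm_mult powr_mult)
    also have "\<dots> \<le> M powr q * norm (v (Suc n)) powr q"
      by (intro mult_right_mono powr_mono2 bbound) (use q in auto)
    finally show "norm (Bop \<beta> v n) powr q \<le> M powr q * norm (v (n + 1)) powr q + 0 * norm (v (n + 1)) powr q"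
      by simp
  qed auto
  thus ?thesis by blast
qed

definition pr :: "nat \<Rightarrow> nat \<Rightarrow> complex" where "pr n m = (\<Prod>l<m. \<beta> (n + l))"

lemma pr_Suc: "pr n (Suc m) = \<beta> n * pr (Suc n) m"
  unfolding pr_def by (subst prod.lessThan_Suc_shift) simp

lemma Bpow: "(Bop \<beta> ^^ m) v n = pr n m * v (n + m)"
proof (induction m arbitrary: n)
  case 0 thus ?case by (simp add: pr_def)
next
  case (Suc m) thus ?case by (simp add: Bop_def pr_Suc)
qed

lemma Bpow_lq: "in_lq q v \<Longrightarrow> in_lq q ((Bop \<beta> ^^ m) v)"
  by (induction m) (auto intro: B_lq)

lemma pr_bound: "norm (pr n m) \<le> M ^ m"
proof -
  have "norm (pr n m) = (\<Prod>l<m. norm (\<beta> (n + l)))" unfolding pr_def by (simp add: prod_norm)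
  also have "\<dots> \<le> (\<Prod>l<m. M)" by (intro prod_mono) (use bbound in auto)
  finally show ?thesis by simp
qed

end


context qsetup begin

lemma Q_lq:
  assumes v: "in_lq q v"
  shows "in_lq q (Qop c v)"
proof -
  define s where "s = (1 + r) / 2"
  define t where "t = r / s"
  define \<rho> where "\<rho> = t powr q"
  have s: "r < s" "s < 1" "0 < s" using r unfolding s_def by auto
  have t: "0 < t" "t < 1" using s r unfolding t_def by auto
  have \<rho>: "0 < \<rho>" "\<rho> < 1"
  proof -
    show "0 < \<rho>" using t unfolding \<rho>_def by simp
    have "t powr q < 1 powr q" using t q by (intro powr_less_mono2) auto
    thus "\<rho> < 1" unfolding \<rho>_def by simp
  qed
  define N where "N = Nq q v"
  have termb: "\<And>j. norm (v j) powr q \<le> N" unfolding N_def by (rule lq_term_le[OF v])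
  define Y where "Y i = (\<Sum>k. \<rho> ^ k * norm (v (i + k)) powr q)" for i
  have Ysum: "summable (\<lambda>k. \<rho> ^ k * norm (v (i + k)) powr q)" for i
  proof (rule summable_comparison_test[of _ "\<lambda>k. N * \<rho> ^ k"])
    show "summable (\<lambda>k. N * \<rho> ^ k)" using \<rho> by (intro summable_mult summable_geometric) auto
    show "\<exists>N0. \<forall>n\<ge>N0. norm (\<rho> ^ n * norm (v (i + n)) powr q) \<le> N * \<rho> ^ n"
      using \<rho> termb by (intro exI[of _ 0] allI impI) (simp add: mult.commute mult_left_mono)
  qed
  have Ynn: "Y i \<ge> 0" for i unfolding Y_def using \<rho> by (intro suminf_nonneg[OF Ysum]) auto
  have tb: "t ^ k * norm (v (i + k)) \<le> Y i powr (1 / q)" for i k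
  proof -
    have nn: "t ^ k * norm (v (i + k)) \<ge> 0" using t by simp
    have "(t ^ k * norm (v (i + k))) powr q = \<rho> ^ k * norm (v (i + k)) powr q"
      unfolding \<rho>_def using t by (simp add: powr_mult pow_powr)
    also have "\<dots> \<le> Y i"
    proof -
      have "sum (\<lambda>k. \<rho> ^ k * norm (v (i + k)) powr q) {k} \<le> Y i"
        unfolding Y_def by (rule sum_le_suminf[OF Ysum]) (use \<rho> in auto)
      thus ?thesis by simp
    qed
    finally have "((t ^ k * norm (v (i + k))) powr q) powr (1 / q) \<le> Y i powr (1 / q)"
      using q by (intro powr_mono2) auto
    thus ?thesis using q nn by (simp add: powr_powr)
  qed
  have Qb: "norm (Qop c v i) \<le> C0 * Y i powr (1 / q) / (1 - s)" for i
  proof -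
    obtain V where V: "\<And>n. norm (v n) \<le> V" using lq_bdd[OF v] by blast
    have sn: "summable (\<lambda>k. norm (gg c i k * v (i + k)))" by (rule Q_summable[OF V])
    have sg: "summable (\<lambda>k. C0 * Y i powr (1 / q) * s ^ k)" using s by (intro summable_mult summable_geometric) auto
    have "norm (Qop c v i) \<le> (\<Sum>k. norm (gg c i k * v (i + k)))"
      unfolding Qop_def by (rule summable_norm[OF sn])
    also have "\<dots> \<le> (\<Sum>k. C0 * Y i powr (1 / q) * s ^ k)"
    proof (rule suminf_le[OF _ sn sg])
      fix k
      have "norm (gg c i k * v (i + k)) \<le> (C0 * r ^ k) * norm (v (i + k))"
        unfolding norm_mult by (intro mult_right_mono gbound) auto
      also have "\<dots> = C0 * s ^ k * (t ^ k * norm (v (i + k)))"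
        using s unfolding t_def by (simp add: power_divide)
      also have "\<dots> \<le> C0 * s ^ k * Y i powr (1 / q)"
        by (intro mult_left_mono tb) (use C0 s in auto)
      finally show "norm (gg c i k * v (i + k)) \<le> C0 * Y i powr (1 / q) * s ^ k" by (simp add: algebra_simps)
    qed
    also have "\<dots> = C0 * Y i powr (1 / q) * (1 / (1 - s))"
      using s by (subst suminf_mult) (auto simp: suminf_geometric)
    finally show ?thesis by simp
  qed
  define K where "K = (C0 / (1 - s)) powr q"
  have Qb2: "norm (Qop c v i) powr q \<le> K * Y i" for i
  proof -
    have "norm (Qop c v i) powr q \<le> (C0 * Y i powr (1 / q) / (1 - s)) powr q"
      using q by (intro powr_mono2 Qb) auto
    also have "\<dots> = K * (Y i powr (1 / q)) powr q"
      unfolding K_def by (simp add: powr_mult powr_divide field_simps)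
    also have "\<dots> = K * Y i" using q Ynn[of i] by (simp add: powr_powr)
    finally show ?thesis .
  qed
  have partial: "(\<Sum>i<I. Y i) \<le> N / (1 - \<rho>)" for I
  proof -
    have "(\<Sum>i<I. Y i) = (\<Sum>k. \<Sum>i<I. \<rho> ^ k * norm (v (i + k)) powr q)"
      unfolding Y_def by (rule suminf_sum[symmetric]) (rule Ysum)
    also have "\<dots> \<le> (\<Sum>k. N * \<rho> ^ k)"
    proof (rule suminf_le)
      fix k
      have "(\<Sum>i<I. norm (v (i + k)) powr q) \<le> Nq q (\<lambda>n. v (n + k))"
        unfolding Nq_def using lq_shift[OF v, of k] unfolding in_lq_def
        by (intro sum_le_suminf) auto
      also have "\<dots> \<le> N" unfolding N_def using lq_shift[OF v, of k] by blast
      finally have "(\<Sum>i<I. norm (v (i + k)) powr q) \<le> N" .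
      thus "(\<Sum>i<I. \<rho> ^ k * norm (v (i + k)) powr q) \<le> N * \<rho> ^ k"
        using \<rho> by (simp add: sum_distrib_left[symmetric] mult.commute mult_left_mono)
      show "summable (\<lambda>k. \<Sum>i<I. \<rho> ^ k * norm (v (i + k)) powr q)"
        by (intro summable_sum Ysum)
      show "summable (\<lambda>k. N * \<rho> ^ k)" using \<rho> by (intro summable_mult summable_geometric) auto
    qed
    also have "\<dots> = N / (1 - \<rho>)" using \<rho> by (subst suminf_mult) (auto simp: suminf_geometric)
    finally show ?thesis .
  qed
  have "in_lq q (Qop c v) \<and> Nq q (Qop c v) \<le> K * (N / (1 - \<rho>))"
  proof (rule lq_bounded_partial)
    fix I
    have "(\<Sum>i<I. norm (Qop c v i) powr q) \<le> (\<Sum>i<I. K * Y i)" by (intro sum_mono Qb2)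
    also have "\<dots> = K * (\<Sum>i<I. Y i)" by (simp add: sum_distrib_left)
    also have "\<dots> \<le> K * (N / (1 - \<rho>))" unfolding K_def by (intro mult_left_mono partial) auto
    finally show "(\<Sum>i<I. norm (Qop c v i) powr q) \<le> K * (N / (1 - \<rho>))" .
  qed
  thus ?thesis by blast
qed

end


definition GG :: "(nat \<Rightarrow> complex) \<Rightarrow> nat \<Rightarrow> nat \<Rightarrow> complex" where
  "GG c i j = (if i \<le> j then gg c i (j - i) else 0)"

lemma GG_0: "GG c i 0 = (if i = 0 then 1 else 0)" by (simp add: GG_def)
lemma GG_Suc: "GG c i (Suc j) = (if i = Suc j then 1 else 0) - c j * GG c i j"
proof (cases "i \<le> j")
  case True
  hence "Suc j - i = Suc (j - i)" by simp
  thus ?thesis using True by (simp add: GG_def gg_Suc')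
qed (auto simp: GG_def)

lemma abcoord_F:
  assumes a: "\<And>n. a n \<noteq> 0"
    and c: "\<And>n. c n = b n / a (Suc n)" and be: "\<And>n. \<beta> n = w n * a n / a (Suc n)"
  shows "abcoord a b (Fw w (fcoef a b n)) j = \<beta> n * GG c (n+1) j + c n * \<beta> (n+1) * GG c (n+2) j"
proof (induction j)
  case 0 thus ?case by (simp add: GG_0 Fw_def)
next
  case (Suc j)
  have rec: "abcoord a b (Fw w (fcoef a b n)) (Suc j) =
      Fw w (fcoef a b n) (Suc j) / a (Suc j) - c j * abcoord a b (Fw w (fcoef a b n)) j"
    using a by (simp add: c diff_divide_distrib)
  have mu: "Fw w (fcoef a b n) (Suc j) / a (Suc j) =
      (if j = n then \<beta> n else if j = Suc n then c n * \<beta> (n+1) else 0)"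
    using a by (auto simp: Fw_def fcoef_def c be)
  show ?case unfolding rec mu Suc GG_Suc by (auto simp: algebra_simps)
qed

context qsetup begin

lemma GG_sums:
  assumes V: "\<And>n. norm (u n) \<le> V"
  shows "(\<lambda>j. GG c i j * u j) sums Qop c u i"
proof -
  have "(\<lambda>k. gg c i k * u (i + k)) sums Qop c u i"
    unfolding Qop_def by (rule summable_sums[OF Q_summable'[OF V]])
  hence "(\<lambda>k. GG c i (k + i) * u (k + i)) sums Qop c u i"
    by (simp add: GG_def add.commute)
  thus ?thesis by (subst (asm) sums_zero_iff_shift) (auto simp: GG_def)
qed

lemma T_eq:
  assumes a: "\<And>n. a n \<noteq> 0"
    and c: "\<And>n. c n = b n / a (Suc n)" and be: "\<And>n. \<beta> n = w n * a n / a (Suc n)"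
    and V: "\<And>n. norm (u n) \<le> V"
  shows "Fw_adj a b w u = Pop c (Bop \<beta> (Qop c u))"
proof
  fix n
  have "(\<lambda>j. \<beta> n * (GG c (n+1) j * u j) + c n * \<beta> (n+1) * (GG c (n+2) j * u j)) sums
        (\<beta> n * Qop c u (n+1) + c n * \<beta> (n+1) * Qop c u (n+2))"
    by (intro sums_add sums_mult GG_sums[OF V])
  moreover have "(\<lambda>j. \<beta> n * (GG c (n+1) j * u j) + c n * \<beta> (n+1) * (GG c (n+2) j * u j)) =
      (\<lambda>j. abcoord a b (Fw w (fcoef a b n)) j * u j)"
    by (rule ext) (simp add: abcoord_F[where a=a and b=b and c=c and \<beta>=\<beta> and w=w, OF a c be] algebra_simps)
  ultimately have "(\<lambda>j. abcoord a b (Fw w (fcoef a b n)) j * u j) sums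
        (\<beta> n * Qop c u (n+1) + c n * \<beta> (n+1) * Qop c u (n+2))" by simp
  hence "Fw_adj a b w u n = \<beta> n * Qop c u (n+1) + c n * \<beta> (n+1) * Qop c u (n+2)"
    unfolding Fw_adj_def dualpair_def by (rule sums_unique[symmetric])
  thus "Fw_adj a b w u n = Pop c (Bop \<beta> (Qop c u)) n"
    by (simp add: Pop_def Bop_def)
qed

end


lemma lq_add:
  assumes "q > 0" "in_lq q x" "in_lq q y"
  shows "in_lq q (\<lambda>n. x n + y n) \<and> Nq q (\<lambda>n. x n + y n) \<le> 2 powr q * Nq q x + 2 powr q * Nq q y"
proof (rule lq_bound[OF assms(2,3)])
  fix n show "norm (x n + y n) powr q \<le> 2 powr q * norm (x n) powr q + 2 powr q * norm (y n) powr q"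
    using powr_add_le[OF assms(1), of "x n" "y n"] by (simp add: algebra_simps)
qed auto

locale tsetup = qsetup +
  fixes T :: "(nat \<Rightarrow> complex) \<Rightarrow> nat \<Rightarrow> complex"
  assumes Teq: "\<And>u. in_lq q u \<Longrightarrow> T u = Pop c (Bop \<beta> (Qop c u))"
begin

lemma T_P: assumes "in_lq q z" shows "T (Pop c z) = Pop c (Bop \<beta> z)"
proof -
  have "in_lq q (Pop c z)" using P_lq[OF assms] by blast
  thus ?thesis using Teq QP[OF assms] by simp
qed

lemma orbit_P: assumes "in_lq q z" shows "(T ^^ n) (Pop c z) = Pop c ((Bop \<beta> ^^ n) z)"
proof (induction n)
  case 0 show ?case by simp
next
  case (Suc n)
  have "(T ^^ Suc n) (Pop c z) = T (Pop c ((Bop \<beta> ^^ n) z))" using Suc by simp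
  also have "\<dots> = Pop c (Bop \<beta> ((Bop \<beta> ^^ n) z))" by (rule T_P[OF Bpow_lq[OF assms]])
  finally show ?case by simp
qed

lemma orbit: assumes "in_lq q u" shows "(T ^^ n) u = Pop c ((Bop \<beta> ^^ n) (Qop c u))"
proof -
  obtain V where V: "\<And>n. norm (u n) \<le> V" using lq_bdd[OF assms] by blast
  have "(T ^^ n) u = (T ^^ n) (Pop c (Qop c u))" using PQ[OF V] by simp
  also have "\<dots> = Pop c ((Bop \<beta> ^^ n) (Qop c u))" by (rule orbit_P[OF Q_lq[OF assms]])
  finally show ?thesis .
qed

lemma orbit_lq: assumes "in_lq q u" shows "in_lq q ((T ^^ n) u)"
  using orbit[OF assms] P_lq[OF Bpow_lq[OF Q_lq[OF assms]]] by simp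

lemma dirB:
  assumes ii: "\<forall>u. in_lq q u \<longrightarrow> (\<forall>n. (\<lambda>\<nu>. (T ^^ \<nu>) u n) \<longlonglongrightarrow> 0)"
  shows "\<not> hypercyclic_lq q T"
proof
  assume "hypercyclic_lq q T"
  then obtain u where u: "in_lq q u"
    and dense: "\<And>v e. in_lq q v \<Longrightarrow> e > 0 \<Longrightarrow> \<exists>\<nu>. lq_norm q ((T ^^ \<nu>) u - v) < e"
    unfolding hypercyclic_lq_def by blast
  have lim: "(\<lambda>\<nu>. (T ^^ \<nu>) u 0) \<longlonglongrightarrow> 0" using ii u by simp
  obtain N0 where N0': "\<forall>\<nu>\<ge>N0. norm ((T ^^ \<nu>) u 0 - 0) < 1/2"
    using LIMSEQ_D[OF lim, of "1/2"] by auto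
  have N0: "\<nu> \<ge> N0 \<Longrightarrow> norm ((T ^^ \<nu>) u 0) < 1/2" for \<nu> using N0' by simp
  define t where "t = 1 + (\<Sum>\<nu><N0. norm ((T ^^ \<nu>) u 0))"
  define v :: "nat \<Rightarrow> complex" where "v = (\<lambda>n. if n = 0 then complex_of_real t else 0)"
  have tge: "t \<ge> 1" unfolding t_def by (simp add: sum_nonneg)
  have vl: "in_lq q v" using lq_finite_support[of 1 v q] q unfolding v_def by auto
  obtain \<nu> where nu: "lq_norm q ((T ^^ \<nu>) u - v) < 1/2" using dense[OF vl, of "1/2"] by auto
  have dl: "in_lq q ((T ^^ \<nu>) u - v)" using lq_diff[OF q orbit_lq[OF u] vl] by blast
  have "norm (((T ^^ \<nu>) u - v) 0) \<le> lq_norm q ((T ^^ \<nu>) u - v)" by (rule lq_norm_coord[OF dl q])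
  moreover have "norm (((T ^^ \<nu>) u - v) 0) \<ge> 1/2"
  proof -
    let ?x = "(T ^^ \<nu>) u 0"
    have "norm (complex_of_real t) - norm ?x \<le> norm (complex_of_real t - ?x)" by (rule norm_triangle_ineq2)
    hence "norm (?x - complex_of_real t) \<ge> norm (complex_of_real t) - norm ?x" by (simp add: norm_minus_commute)
    moreover have tnn: "norm (complex_of_real t) = t" using tge by simp
    moreover have "t - norm ?x \<ge> 1/2"
    proof (cases "\<nu> < N0")
      case True
      have "norm ?x \<le> (\<Sum>\<nu><N0. norm ((T ^^ \<nu>) u 0))"
        using True by (intro member_le_sum[of \<nu> "{..<N0}" "\<lambda>\<nu>. norm ((T ^^ \<nu>) u 0)"]) auto
      thus ?thesis unfolding t_def by simp
    next
      case False
      hence "norm ?x < 1/2" using N0 by simp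
      thus ?thesis using tge by simp
    qed
    ultimately show ?thesis unfolding v_def by simp
  qed
  ultimately show False using nu by simp
qed

end


context tsetup begin

lemma pr_split: "pr 0 (n + m) = pr 0 n * pr n m"
proof (induction m)
  case 0 thus ?case by (simp add: pr_def)
next
  case (Suc m)
  have "pr 0 (n + Suc m) = pr 0 (n + m) * \<beta> (n + m)" by (simp add: pr_def)
  moreover have "pr n (Suc m) = pr n m * \<beta> (n + m)" by (simp add: pr_def)
  ultimately show ?case using Suc by simp
qed

lemma pr_ne: "pr n m \<noteq> 0" unfolding pr_def using bne by simp

lemma unbounded:
  assumes nii: "\<not> (\<forall>u. in_lq q u \<longrightarrow> (\<forall>n. (\<lambda>\<nu>. (T ^^ \<nu>) u n) \<longlonglongrightarrow> 0))"
  shows "\<exists>n. norm (pr 0 n) > K"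
proof (rule ccontr)
  assume "\<not> ?thesis"
  hence K: "\<And>n. norm (pr 0 n) \<le> K" by (simp add: not_less)
  have "\<forall>u. in_lq q u \<longrightarrow> (\<forall>n. (\<lambda>\<nu>. (T ^^ \<nu>) u n) \<longlonglongrightarrow> 0)"
  proof (intro allI impI)
    fix u n assume u: "in_lq q u"
    define z where "z = Qop c u"
    have zl: "in_lq q z" unfolding z_def by (rule Q_lq[OF u])
    have z0: "z \<longlonglongrightarrow> 0" by (rule lq_tendsto0[OF zl q])
    have X: "(\<lambda>\<nu>. pr m \<nu> * z (m + \<nu>)) \<longlonglongrightarrow> 0" for m
    proof (rule Lim_null_comparison)
      show "\<forall>\<^sub>F \<nu> in sequentially. norm (pr m \<nu> * z (m + \<nu>)) \<le> K / norm (pr 0 m) * norm (z (\<nu> + m))"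
      proof (intro always_eventually allI)
        fix \<nu>
        have "norm (pr 0 (m + \<nu>)) = norm (pr 0 m) * norm (pr m \<nu>)" by (simp add: pr_split norm_mult)
        hence "norm (pr m \<nu>) = norm (pr 0 (m + \<nu>)) / norm (pr 0 m)" using pr_ne[of 0 m] by simp
        also have "\<dots> \<le> K / norm (pr 0 m)" by (intro divide_right_mono K) auto
        finally have "norm (pr m \<nu>) \<le> K / norm (pr 0 m)" .
        hence "norm (pr m \<nu>) * norm (z (\<nu> + m)) \<le> K / norm (pr 0 m) * norm (z (\<nu> + m))"
          by (rule mult_right_mono) simp
        thus "norm (pr m \<nu> * z (m + \<nu>)) \<le> K / norm (pr 0 m) * norm (z (\<nu> + m))"
          unfolding norm_mult by (simp add: add.commute)
      qed
      have "(\<lambda>\<nu>. z (\<nu> + m)) \<longlonglongrightarrow> 0" by (rule LIMSEQ_ignore_initial_segment[OF z0])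
      hence "(\<lambda>\<nu>. norm (z (\<nu> + m))) \<longlonglongrightarrow> 0" by (simp add: tendsto_norm_zero_iff)
      thus "(\<lambda>\<nu>. K / norm (pr 0 m) * norm (z (\<nu> + m))) \<longlonglongrightarrow> 0" by (rule tendsto_mult_right_zero)
    qed
    have "(\<lambda>\<nu>. pr n \<nu> * z (n + \<nu>) + c n * (pr (Suc n) \<nu> * z (Suc n + \<nu>))) \<longlonglongrightarrow> 0 + c n * 0"
      by (intro tendsto_add tendsto_mult X tendsto_const)
    moreover have "(\<lambda>\<nu>. (T ^^ \<nu>) u n) = (\<lambda>\<nu>. pr n \<nu> * z (n + \<nu>) + c n * (pr (Suc n) \<nu> * z (Suc n + \<nu>)))"
      by (rule ext) (simp add: orbit[OF u] Pop_def Bpow z_def)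
    ultimately show "(\<lambda>\<nu>. (T ^^ \<nu>) u n) \<longlonglongrightarrow> 0" by simp
  qed
  thus False using nii by blast
qed

lemma unbounded_tail:
  assumes ub: "\<And>K. \<exists>n. norm (pr 0 n) > K"
  shows "\<exists>n\<ge>L. norm (pr 0 n) \<ge> K"
proof (rule ccontr)
  assume "\<not> ?thesis"
  hence a: "\<And>n. n \<ge> L \<Longrightarrow> norm (pr 0 n) < K" by (meson not_le)
  obtain n where n: "norm (pr 0 n) > K + (\<Sum>i<L. norm (pr 0 i))" using ub by blast
  show False
  proof (cases "n \<ge> L")
    case True thus False using a[OF True] n by (smt (verit) sum_nonneg norm_ge_zero)
  next
    case False
    hence "norm (pr 0 n) \<le> (\<Sum>i<L. norm (pr 0 i))"
      by (intro member_le_sum[of n "{..<L}" "\<lambda>i. norm (pr 0 i)"]) auto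
    moreover have "K \<ge> 0" using a[of L] norm_ge_zero[of "pr 0 L"] by linarith
    ultimately show False using n by simp
  qed
qed

end


definition rvec :: "(rat \<times> rat) list \<Rightarrow> nat \<Rightarrow> complex" where
  "rvec xs n = (if n < length xs then Complex (of_rat (fst (xs ! n))) (of_rat (snd (xs ! n))) else 0)"

lemma rat_approx_complex:
  assumes "e > 0"
  shows "\<exists>p::rat \<times> rat. norm (z - Complex (of_rat (fst p)) (of_rat (snd p))) < e"
proof -
  obtain r1 where r1: "r1 \<in> \<rat>" "Re z - e/2 < r1" "r1 < Re z + e/2"
    using Rats_dense_in_real[of "Re z - e/2" "Re z + e/2"] assms by auto
  obtain r2 where r2: "r2 \<in> \<rat>" "Im z - e/2 < r2" "r2 < Im z + e/2"
    using Rats_dense_in_real[of "Im z - e/2" "Im z + e/2"] assms by auto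
  obtain p1 where p1: "r1 = of_rat p1" using r1(1) Rats_cases by blast
  obtain p2 where p2: "r2 = of_rat p2" using r2(1) Rats_cases by blast
  have "norm (z - Complex r1 r2) \<le> \<bar>Re (z - Complex r1 r2)\<bar> + \<bar>Im (z - Complex r1 r2)\<bar>" by (rule cmod_le)
  also have "\<dots> < e" using r1 r2 by simp
  finally show ?thesis using p1 p2 by (intro exI[of _ "(p1, p2)"]) simp
qed

lemma density:
  assumes q: "q > 0" and z: "in_lq q z" and e: "e > 0"
  shows "\<exists>xs. in_lq q (rvec xs - z) \<and> Nq q (rvec xs - z) < e"
proof -
  have sz: "summable (\<lambda>n. norm (z n) powr q)" using z unfolding in_lq_def .
  obtain D where D: "\<forall>n\<ge>D. norm (\<Sum>i. norm (z (i + n)) powr q) < e / 2"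
    using suminf_exist_split[OF _ sz, of "e/2"] e by auto
  define \<eta> where "\<eta> = (e / (2 * (D + 1))) powr (1 / q)"
  have \<eta>: "\<eta> > 0" unfolding \<eta>_def using e by simp
  have "\<forall>n. \<exists>p::rat \<times> rat. norm (z n - Complex (of_rat (fst p)) (of_rat (snd p))) < \<eta>"
    using rat_approx_complex[OF \<eta>] by blast
  then obtain f where f: "\<And>n. norm (z n - Complex (of_rat (fst (f n))) (of_rat (snd (f n)))) < \<eta>"
    by metis
  define xs where "xs = map f [0..<D]"
  have vx: "rvec xs n = (if n < D then Complex (of_rat (fst (f n))) (of_rat (snd (f n))) else 0)" for n
    unfolding rvec_def xs_def by simp
  have vl: "in_lq q (rvec xs)" using lq_finite_support[of D "rvec xs" q] q vx by auto
  have dl: "in_lq q (rvec xs - z)" using lq_diff[OF q vl z] by blast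
  have s: "summable (\<lambda>n. norm ((rvec xs - z) n) powr q)" using dl unfolding in_lq_def .
  have "Nq q (rvec xs - z) = (\<Sum>n. norm ((rvec xs - z) (n + D)) powr q) + (\<Sum>n<D. norm ((rvec xs - z) n) powr q)"
    unfolding Nq_def by (rule suminf_split_initial_segment[OF s])
  also have "(\<Sum>n. norm ((rvec xs - z) (n + D)) powr q) = (\<Sum>i. norm (z (i + D)) powr q)"
    by (simp add: vx norm_minus_commute)
  also have "\<dots> < e / 2" using D by auto
  also have "(\<Sum>n<D. norm ((rvec xs - z) n) powr q) \<le> (\<Sum>n<D. e / (2 * (D + 1)))"
  proof (rule sum_mono)
    fix n assume "n \<in> {..<D}"
    hence "norm ((rvec xs - z) n) = norm (z n - Complex (of_rat (fst (f n))) (of_rat (snd (f n))))"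
      by (simp add: vx norm_minus_commute)
    also have "\<dots> < \<eta>" by (rule f)
    finally have "norm ((rvec xs - z) n) powr q \<le> \<eta> powr q" using q by (intro powr_mono2) auto
    also have "\<eta> powr q = e / (2 * (D + 1))" unfolding \<eta>_def using e q by (simp add: powr_powr)
    finally show "norm ((rvec xs - z) n) powr q \<le> e / (2 * (D + 1))" .
  qed
  also have "(\<Sum>n<D. e / (2 * (D + 1))) \<le> e / 2"
    using e by (simp add: field_simps)
  finally have "Nq q (rvec xs - z) < e" by linarith
  thus ?thesis using dl by blast
qed

lemma disj_powr:
  assumes "finite S" "\<And>i j. i \<in> S \<Longrightarrow> j \<in> S \<Longrightarrow> f i \<noteq> 0 \<Longrightarrow> f j \<noteq> 0 \<Longrightarrow> i = j" "q > 0"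
  shows "norm (sum f S) powr q \<le> (\<Sum>i\<in>S. norm (f i :: complex) powr q)"
proof (cases "\<exists>i\<in>S. f i \<noteq> 0")
  case False
  hence "sum f S = 0" by simp
  thus ?thesis by (simp add: sum_nonneg)
next
  case True
  then obtain i where i: "i \<in> S" "f i \<noteq> 0" by blast
  have "sum f S = f i + sum f (S - {i})" using sum.remove[OF assms(1) i(1)] .
  also have "sum f (S - {i}) = 0" using assms(2) i by (intro sum.neutral) blast
  finally have "norm (sum f S) powr q = norm (f i) powr q" by simp
  also have "\<dots> \<le> (\<Sum>i\<in>S. norm (f i) powr q)"
    by (rule member_le_sum[OF i(1)]) (use assms in auto)
  finally show ?thesis .
qed

lemma geo_sum: "(\<Sum>i<n. (1/2::real) ^ i) = 2 - 2 * (1/2) ^ n"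
  by (induction n) (auto simp: field_simps)

lemma geo_tail: "(\<Sum>i\<in>{Suc j..<K}. (1/2::real) ^ i) \<le> (1/2) ^ j"
proof (cases "K \<le> Suc j")
  case True thus ?thesis by simp
next
  case False
  hence eq: "{..<K} = {..<Suc j} \<union> {Suc j..<K}" by auto
  have "(\<Sum>i<K. (1/2::real) ^ i) = (\<Sum>i<Suc j. (1/2::real) ^ i) + (\<Sum>i\<in>{Suc j..<K}. (1/2::real) ^ i)"
    unfolding eq by (rule sum.union_disjoint) auto
  hence "(\<Sum>i\<in>{Suc j..<K}. (1/2::real) ^ i) = 2 * (1/2) ^ Suc j - 2 * (1/2) ^ K"
    unfolding geo_sum by simp
  thus ?thesis by simp
qed

primrec rseq :: "(nat \<Rightarrow> nat \<Rightarrow> nat \<Rightarrow> bool) \<Rightarrow> nat \<Rightarrow> nat" where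
  "rseq C 0 = (SOME m. C 0 0 m)"
| "rseq C (Suc j) = (SOME m. C (Suc j) (rseq C j) m)"

lemma rseq0: "(\<And>j p. \<exists>m. C j p m) \<Longrightarrow> C 0 0 (rseq C 0)"
  by (simp add: someI_ex)
lemma rseqS: "(\<And>j p. \<exists>m. C j p m) \<Longrightarrow> C (Suc j) (rseq C j) (rseq C (Suc j))"
  by (simp add: someI_ex)



context tsetup begin

definition XX :: "nat \<Rightarrow> (nat \<Rightarrow> complex) \<Rightarrow> nat \<Rightarrow> complex" where
  "XX m v k = (if m \<le> k then v (k - m) * pr 0 (k - m) / pr 0 k else 0)"

lemma BX: "(Bop \<beta> ^^ m) (XX m v) n = v n"
proof -
  have "(Bop \<beta> ^^ m) (XX m v) n = pr n m * (v n * pr 0 n / pr 0 (n + m))"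
    by (simp add: Bpow XX_def)
  also have "\<dots> = v n" unfolding pr_split[of n m] using pr_ne[of 0 n] pr_ne[of n m] by (simp add: field_simps)
  finally show ?thesis .
qed

lemma X_small:
  assumes ub: "\<And>K. \<exists>n. norm (pr 0 n) > K"
    and supp: "\<And>n. n \<ge> D \<Longrightarrow> v n = 0" and \<delta>: "\<delta> > 0"
  shows "\<exists>m\<ge>L. in_lq q (XX m v) \<and> Nq q (XX m v) \<le> \<delta>"
proof -
  define A where "A = (\<Sum>n<D. norm (v n * pr 0 n) powr q)"
  have A: "A \<ge> 0" unfolding A_def by (intro sum_nonneg) auto
  define K where "K = ((A + 1) / \<delta>) powr (1 / q)"
  have K: "K > 0" unfolding K_def using A \<delta> by simp
  have Kq: "K powr q = (A + 1) / \<delta>" unfolding K_def using A \<delta> q by (simp add: powr_powr)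
  have MD: "M ^ D > 0" using M by simp
  obtain n where n: "n \<ge> L + D" "norm (pr 0 n) \<ge> K * M ^ D"
    using unbounded_tail[OF ub] by blast
  define m where "m = n - D"
  have m: "m \<ge> L" "m + D = n" using n unfolding m_def by auto
  have big: "norm (pr 0 (k + m)) \<ge> K" if k: "k < D" for k
  proof -
    have "n = (k + m) + (D - k)" using m k by simp
    hence "pr 0 n = pr 0 (k + m) * pr (k + m) (D - k)" using pr_split by metis
    hence "norm (pr 0 n) = norm (pr 0 (k + m)) * norm (pr (k + m) (D - k))" by (simp add: norm_mult)
    also have "\<dots> \<le> norm (pr 0 (k + m)) * M ^ D"
    proof (intro mult_left_mono)
      have "norm (pr (k + m) (D - k)) \<le> M ^ (D - k)" by (rule pr_bound)
      also have "\<dots> \<le> M ^ D" using M by (intro power_increasing) auto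
      finally show "norm (pr (k + m) (D - k)) \<le> M ^ D" .
    qed auto
    finally have "K * M ^ D \<le> norm (pr 0 (k + m)) * M ^ D" using n by linarith
    thus ?thesis using MD by simp
  qed
  have z: "XX m v k = 0" if "k \<ge> m + D" for k
    using that supp[of "k - m"] unfolding XX_def by auto
  have xl: "in_lq q (XX m v)" using lq_finite_support[of "m + D" "XX m v" q] z q by blast
  have s: "summable (\<lambda>k. norm (XX m v k) powr q)" using xl unfolding in_lq_def .
  have "Nq q (XX m v) = (\<Sum>k. norm (XX m v (k + m)) powr q) + (\<Sum>k<m. norm (XX m v k) powr q)"
    unfolding Nq_def by (rule suminf_split_initial_segment[OF s])
  also have "(\<Sum>k<m. norm (XX m v k) powr q) = 0" by (simp add: XX_def)
  also have "(\<Sum>k. norm (XX m v (k + m)) powr q) = (\<Sum>k<D. norm (XX m v (k + m)) powr q)"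
    by (rule suminf_finite) (use z in auto)
  also have "\<dots> \<le> (\<Sum>k<D. norm (v k * pr 0 k) powr q / K powr q)"
  proof (rule sum_mono)
    fix k assume k: "k \<in> {..<D}"
    have "norm (XX m v (k + m)) powr q = norm (v k * pr 0 k) powr q / norm (pr 0 (k + m)) powr q"
      by (simp add: XX_def norm_divide powr_divide)
    also have "\<dots> \<le> norm (v k * pr 0 k) powr q / K powr q"
      using big[of k] k K q by (intro divide_left_mono powr_mono2 mult_pos_pos) auto
    finally show "norm (XX m v (k + m)) powr q \<le> norm (v k * pr 0 k) powr q / K powr q" .
  qed
  also have "\<dots> = A / K powr q" unfolding A_def by (simp add: sum_divide_distrib)
  also have "\<dots> = A * \<delta> / (A + 1)" unfolding Kq using A \<delta> by (simp add: field_simps)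
  also have "\<dots> \<le> \<delta>" using A \<delta> by (simp add: field_simps)
  finally show ?thesis using xl m by auto
qed

end


context tsetup begin

lemma hyp_construct:
  assumes ub: "\<And>K. \<exists>n. norm (pr 0 n) > K"
  shows "hypercyclic_lq q T"
proof -
  define E where "E j = rvec (from_nat (fst (prod_decode j)) :: (rat \<times> rat) list)" for j
  define Dj where "Dj j = length (from_nat (fst (prod_decode j)) :: (rat \<times> rat) list)" for j
  have Esupp: "n \<ge> Dj j \<Longrightarrow> E j n = 0" for n j unfolding E_def Dj_def rvec_def by auto
  define Mq where "Mq = M powr q"
  have Mq: "Mq \<ge> 1" unfolding Mq_def using M q by (simp add: ge_one_powr_ge_zero)
  define C where "C j p m \<longleftrightarrow> (j > 0 \<longrightarrow> m \<ge> p + Dj (j - 1) + 1) \<and> in_lq q (XX m (E j))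
      \<and> Nq q (XX m (E j)) \<le> (1/2) ^ j / Mq ^ p" for j p m
  have ex: "\<exists>m. C j p m" for j p
  proof -
    have "(1/2::real) ^ j / Mq ^ p > 0" using Mq by simp
    then obtain m where "m \<ge> p + Dj (j - 1) + 1" "in_lq q (XX m (E j))" "Nq q (XX m (E j)) \<le> (1/2) ^ j / Mq ^ p"
      using X_small[OF ub, where D="Dj j" and v="E j" and \<delta>="(1/2) ^ j / Mq ^ p" and L="p + Dj (j - 1) + 1"] Esupp
      by blast
    thus ?thesis unfolding C_def by blast
  qed
  define mm where "mm = rseq C"
  have C0': "C 0 0 (mm 0)" unfolding mm_def by (rule rseq0[OF ex])
  have CS: "C (Suc j) (mm j) (mm (Suc j))" for j unfolding mm_def by (rule rseqS[OF ex])
  have mmS: "mm (Suc j) \<ge> mm j + Dj j + 1" for j using CS[of j] unfolding C_def by simp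
  have mono: "i \<le> j \<Longrightarrow> mm i \<le> mm j" for i j
  proof (rule lift_Suc_mono_le[of mm])
    fix n show "mm n \<le> mm (Suc n)" using mmS[of n] by simp
  qed
  have mm_ge: "mm j \<ge> j" for j
  proof (induction j)
    case (Suc j) thus ?case using mmS[of j] by simp
  qed simp
  have sep: "i < j \<Longrightarrow> mm i + Dj i < mm j" for i j
    using mmS[of i] mono[of "Suc i" j] by simp
  define x where "x i = XX (mm i) (E i)" for i
  have xl: "in_lq q (x i)" for i
    using C0' CS[of "i - 1"] unfolding C_def x_def by (cases i) auto
  have xN0: "Nq q (x 0) \<le> 1" using C0' unfolding C_def x_def by simp
  have xNS: "Nq q (x (Suc j)) \<le> (1/2) ^ Suc j / Mq ^ mm j" for j using CS[of j] unfolding C_def x_def by simp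
  have xN: "Nq q (x i) \<le> (1/2) ^ i" for i
  proof (cases i)
    case 0 thus ?thesis using xN0 by simp
  next
    case (Suc j)
    have "(1/2::real) ^ Suc j / Mq ^ mm j \<le> (1/2) ^ Suc j" using Mq
      by (intro divide_left_mono_neg[of 1, simplified] | simp add: divide_le_eq one_le_power mult_le_cancel_left1)+
    thus ?thesis using xNS[of j] Suc by simp
  qed
  have xNt: "Nq q (x i) \<le> (1/2) ^ i / Mq ^ mm j" if ij: "i > j" for i j
  proof -
    obtain i' where i': "i = Suc i'" "i' \<ge> j" using ij by (cases i) auto
    have "Mq ^ mm j \<le> Mq ^ mm i'" using Mq mono[OF i'(2)] by (intro power_increasing) auto
    hence "(1/2::real) ^ i / Mq ^ mm i' \<le> (1/2) ^ i / Mq ^ mm j" using Mq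
      by (intro divide_left_mono) auto
    thus ?thesis using xNS[of i'] i' by simp
  qed
  have xsupp: "x i k \<noteq> 0 \<Longrightarrow> mm i \<le> k \<and> k < mm i + Dj i" for i k
  proof -
    assume a: "x i k \<noteq> 0"
    hence m: "mm i \<le> k" unfolding x_def XX_def by (auto split: if_splits)
    hence "E i (k - mm i) \<noteq> 0" using a unfolding x_def XX_def by auto
    hence "k - mm i < Dj i" using Esupp[of i "k - mm i"] by linarith
    thus ?thesis using m by simp
  qed
  have xdisj: "x i k \<noteq> 0 \<Longrightarrow> x i' k \<noteq> 0 \<Longrightarrow> i = i'" for i i' k
    using xsupp[of i k] xsupp[of i' k] sep[of i i'] sep[of i' i] by (cases i i' rule: linorder_cases) auto
  define Yl where "Yl l k = (\<Sum>i\<in>{l..k}. x i k)" for l k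
  have Ypart: "(\<Sum>k<K. norm (Yl l k) powr q) \<le> (\<Sum>i\<in>{l..<K}. Nq q (x i))" for l K
  proof -
    have "(\<Sum>k<K. norm (Yl l k) powr q) \<le> (\<Sum>k<K. \<Sum>i\<in>{l..<K}. norm (x i k) powr q)"
    proof (rule sum_mono)
      fix k assume k: "k \<in> {..<K}"
      have "norm (Yl l k) powr q \<le> (\<Sum>i\<in>{l..k}. norm (x i k) powr q)"
        unfolding Yl_def by (rule disj_powr) (use xdisj q in auto)
      also have "\<dots> \<le> (\<Sum>i\<in>{l..<K}. norm (x i k) powr q)"
        by (rule sum_mono2) (use k in auto)
      finally show "norm (Yl l k) powr q \<le> (\<Sum>i\<in>{l..<K}. norm (x i k) powr q)" .
    qed
    also have "\<dots> = (\<Sum>i\<in>{l..<K}. \<Sum>k<K. norm (x i k) powr q)" by (rule sum.swap)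
    also have "\<dots> \<le> (\<Sum>i\<in>{l..<K}. Nq q (x i))"
    proof (rule sum_mono)
      fix i show "(\<Sum>k<K. norm (x i k) powr q) \<le> Nq q (x i)"
        unfolding Nq_def using xl[of i] unfolding in_lq_def by (intro sum_le_suminf) auto
    qed
    finally show ?thesis .
  qed
  define y where "y = Yl 0"
  have yl: "in_lq q y"
  proof -
    have "in_lq q y \<and> Nq q y \<le> 2"
    proof (rule lq_bounded_partial)
      fix K
      have "(\<Sum>k<K. norm (y k) powr q) \<le> (\<Sum>i\<in>{0..<K}. Nq q (x i))" unfolding y_def by (rule Ypart)
      also have "\<dots> \<le> (\<Sum>i<K. (1/2::real) ^ i)" unfolding atLeast0LessThan by (intro sum_mono xN)
      also have "\<dots> \<le> 2" unfolding geo_sum by simp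
      finally show "(\<Sum>k<K. norm (y k) powr q) \<le> 2" .
    qed
    thus ?thesis by blast
  qed
  have tl: "in_lq q (Yl (Suc j)) \<and> Nq q (Yl (Suc j)) \<le> (1/2) ^ j / Mq ^ mm j" for j
  proof (rule lq_bounded_partial)
    fix K
    have "(\<Sum>k<K. norm (Yl (Suc j) k) powr q) \<le> (\<Sum>i\<in>{Suc j..<K}. Nq q (x i))" by (rule Ypart)
    also have "\<dots> \<le> (\<Sum>i\<in>{Suc j..<K}. (1/2::real) ^ i / Mq ^ mm j)" by (intro sum_mono xNt) auto
    also have "\<dots> = (\<Sum>i\<in>{Suc j..<K}. (1/2::real) ^ i) / Mq ^ mm j" by (simp add: sum_divide_distrib)
    also have "\<dots> \<le> (1/2) ^ j / Mq ^ mm j" using Mq by (intro divide_right_mono geo_tail) auto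
    finally show "(\<Sum>k<K. norm (Yl (Suc j) k) powr q) \<le> (1/2) ^ j / Mq ^ mm j" .
  qed
  have ysplit: "y k = x j k + Yl (Suc j) k" if k: "k \<ge> mm j" for j k
  proof -
    have jk: "j \<le> k" using mm_ge[of j] k by simp
    have eq: "{0..k} = {0..<j} \<union> {j..k}" using jk by auto
    have "y k = (\<Sum>i\<in>{0..<j}. x i k) + (\<Sum>i\<in>{j..k}. x i k)"
      unfolding y_def Yl_def eq by (rule sum.union_disjoint) auto
    also have "(\<Sum>i\<in>{0..<j}. x i k) = 0"
    proof (rule sum.neutral, rule ballI)
      fix i assume "i \<in> {0..<j}"
      hence "mm i + Dj i < mm j" by (intro sep) auto
      thus "x i k = 0" using xsupp[of i k] k by auto
    qed
    also have "(\<Sum>i\<in>{j..k}. x i k) = x j k + Yl (Suc j) k"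
      unfolding Yl_def by (rule sum.atLeast_Suc_atMost[OF jk])
    finally show ?thesis by simp
  qed
  have BY: "(Bop \<beta> ^^ mm j) y n - E j n = pr n (mm j) * Yl (Suc j) (n + mm j)" for j n
  proof -
    have "(Bop \<beta> ^^ mm j) y n = pr n (mm j) * (x j (n + mm j) + Yl (Suc j) (n + mm j))"
      by (simp add: Bpow ysplit)
    also have "pr n (mm j) * x j (n + mm j) = E j n"
      using BX[of "mm j" "E j" n] unfolding x_def by (simp add: Bpow)
    hence "pr n (mm j) * (x j (n + mm j) + Yl (Suc j) (n + mm j)) = E j n + pr n (mm j) * Yl (Suc j) (n + mm j)"
      by (simp add: distrib_left)
    finally show ?thesis by simp
  qed
  have BYN: "in_lq q ((Bop \<beta> ^^ mm j) y - E j) \<and> Nq q ((Bop \<beta> ^^ mm j) y - E j) \<le> (1/2) ^ j" for j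
  proof -
    let ?t = "\<lambda>n. Yl (Suc j) (n + mm j)"
    have sh: "in_lq q ?t \<and> Nq q ?t \<le> Nq q (Yl (Suc j))" by (rule lq_shift) (use tl in blast)
    have "in_lq q ((Bop \<beta> ^^ mm j) y - E j) \<and> Nq q ((Bop \<beta> ^^ mm j) y - E j) \<le> Mq ^ mm j * Nq q ?t + 0 * Nq q ?t"
    proof (rule lq_bound[OF conjunct1[OF sh] conjunct1[OF sh]])
      fix n
      have "norm (((Bop \<beta> ^^ mm j) y - E j) n) powr q = norm (pr n (mm j)) powr q * norm (?t n) powr q"
        by (simp add: BY norm_mult powr_mult)
      also have "\<dots> \<le> (M ^ mm j) powr q * norm (?t n) powr q"
        using q by (intro mult_right_mono powr_mono2 pr_bound) auto
      also have "(M ^ mm j) powr q = Mq ^ mm j" unfolding Mq_def using M by (simp add: pow_powr)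
      finally show "norm (((Bop \<beta> ^^ mm j) y - E j) n) powr q \<le> Mq ^ mm j * norm (?t n) powr q + 0 * norm (?t n) powr q"
        by simp
    qed (use Mq in auto)
    moreover have "Mq ^ mm j * Nq q ?t \<le> Mq ^ mm j * ((1/2) ^ j / Mq ^ mm j)"
      using sh tl[of j] Mq by (intro mult_left_mono) auto
    moreover have "Mq ^ mm j * ((1/2) ^ j / Mq ^ mm j) = (1/2::real) ^ j" using Mq by simp
    ultimately show ?thesis by simp
  qed
  define u0 where "u0 = Pop c y"
  have u0l: "in_lq q u0" unfolding u0_def using P_lq[OF yl] by blast
  show ?thesis unfolding hypercyclic_lq_def
  proof (intro exI[of _ u0] conjI allI impI)
    show "in_lq q u0" by (rule u0l)
    fix v :: "nat \<Rightarrow> complex" and e :: real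
    assume v: "in_lq q v" and e: "e > 0"
    define z where "z = Qop c v"
    have zl: "in_lq q z" unfolding z_def by (rule Q_lq[OF v])
    obtain V where V: "\<And>n. norm (v n) \<le> V" using lq_bdd[OF v] by blast
    have vz: "v = Pop c z" unfolding z_def using PQ[OF V] by simp
    define CP where "CP = 2 powr q * (1 + Cc powr q)"
    have CP: "CP > 0" unfolding CP_def by (simp add: add_pos_nonneg)
    define \<eta> where "\<eta> = e powr q / (4 * CP * 2 powr q)"
    have \<eta>: "\<eta> > 0" unfolding \<eta>_def using e CP by simp
    obtain xs where xs: "in_lq q (rvec xs - z)" "Nq q (rvec xs - z) < \<eta>"
      using density[OF q zl \<eta>] by blast
    obtain J where J: "(1/2::real) ^ J < \<eta>" using real_arch_pow_inv[OF \<eta>, of "1/2"] by auto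
    define j where "j = prod_encode (to_nat xs, J)"
    have jJ: "j \<ge> J" unfolding j_def by (rule le_prod_encode_2)
    have Ej: "E j = rvec xs" unfolding E_def j_def by simp
    have orb: "(T ^^ mm j) u0 = Pop c ((Bop \<beta> ^^ mm j) y)" unfolding u0_def by (rule orbit_P[OF yl])
    define w where "w = (\<lambda>n. ((Bop \<beta> ^^ mm j) y - E j) n + (E j - z) n)"
    have weq: "(T ^^ mm j) u0 - v = Pop c w"
      unfolding orb vz w_def by (rule ext) (simp add: Pop_def algebra_simps)
    have wb: "in_lq q w \<and> Nq q w \<le> 2 powr q * Nq q ((Bop \<beta> ^^ mm j) y - E j) + 2 powr q * Nq q (E j - z)"
      unfolding w_def by (rule lq_add[OF q conjunct1[OF BYN]]) (use xs(1) in \<open>simp only: Ej\<close>)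
    have "(1/2::real) ^ j \<le> (1/2) ^ J" using jJ by (intro power_decreasing) auto
    hence "Nq q ((Bop \<beta> ^^ mm j) y - E j) \<le> \<eta>" using BYN[of j] J by linarith
    hence "Nq q w \<le> 2 powr q * \<eta> + 2 powr q * \<eta>" using wb xs Ej
      by (smt (verit) mult_left_mono powr_ge_zero)
    hence Nw: "Nq q w \<le> 2 * 2 powr q * \<eta>" by (simp add: mult_ac)
    have Pw: "in_lq q (Pop c w) \<and> Nq q (Pop c w) \<le> CP * Nq q w" unfolding CP_def using P_lq wb by blast
    have "Nq q (Pop c w) \<le> CP * (2 * 2 powr q * \<eta>)" using Pw Nw CP by (smt (verit) mult_left_mono)
    also have "\<dots> = e powr q / 2" unfolding \<eta>_def using CP by (simp add: field_simps)
    also have "\<dots> < e powr q" using e by simp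
    finally have "Nq q (Pop c w) < e powr q" .
    hence "lq_norm q (Pop c w) < e" using lq_norm_less[OF q e] Pw by blast
    thus "\<exists>\<nu>. lq_norm q ((T ^^ \<nu>) u0 - v) < e" using weq by metis
  qed
qed

end


lemma gg_bound_setup:
  assumes r: "r > 0" and L: "\<And>n. n \<ge> L \<Longrightarrow> norm (c n) < r"
  shows "norm (gg c i k) \<le> (\<Prod>n<L. max 1 (norm (c n) / r)) * r ^ k"
proof -
  define h where "h n = max 1 (norm (c n) / r)" for n
  have h1: "h n \<ge> 1" for n unfolding h_def by simp
  have ch: "norm (c n) \<le> r * h n" for n
    unfolding h_def using r by (simp add: field_simps max_def)
  have "norm (gg c i k) = (\<Prod>l<k. norm (c (i + l)))" unfolding gg_def by (simp add: prod_norm[symmetric])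
  also have "\<dots> \<le> (\<Prod>l<k. r * h (i + l))"
    by (intro prod_mono) (use ch in auto)
  also have "\<dots> = r ^ k * (\<Prod>l<k. h (i + l))" by (simp add: prod.distrib)
  also have "(\<Prod>l<k. h (i + l)) = prod h {i..<k + i}"
    using prod.shift_bounds_nat_ivl[of h 0 i k] by (simp add: atLeast0LessThan add.commute)
  also have "\<dots> = prod h ({i..<k + i} \<inter> {..<L})"
  proof (rule prod.mono_neutral_right)
    show "\<forall>n\<in>{i..<k + i} - {i..<k + i} \<inter> {..<L}. h n = 1"
    proof
      fix n assume "n \<in> {i..<k + i} - {i..<k + i} \<inter> {..<L}"
      hence "n \<ge> L" by auto
      hence "norm (c n) < r" by (rule L)
      hence "norm (c n) / r \<le> 1" using r by simp
      thus "h n = 1" unfolding h_def by simp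
    qed
  qed auto
  also have "\<dots> \<le> prod h {..<L}"
    by (rule prod_mono2) (use h1 in \<open>auto intro: order_trans[OF zero_le_one]\<close>)
  finally show ?thesis unfolding h_def using r by (simp add: mult.commute mult_left_mono)
qed

theorem mainTheorem11:
  fixes a b w :: "nat \<Rightarrow> complex" and p q :: real
  assumes "1 < p" and "1 / p + 1 / q = 1"
    and "\<And>n. a n \<noteq> 0" and "\<And>n. b n \<noteq> 0" and "\<And>n. w n \<noteq> 0"
    and "limsup (\<lambda>n. ereal ((norm (a n) + norm (b n)) powr (1 / real n))) < \<infinity>"
    and "bdd_above (range (\<lambda>n. norm (w n * a n / a (Suc n))))"
    and "limsup (\<lambda>n. ereal (norm (b n / a (Suc n)))) < 1"
  shows "\<not> hypercyclic_lq q (Fw_adj a b w) \<longleftrightarrow>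
         (\<forall>u. in_lq q u \<longrightarrow> (\<forall>n. (\<lambda>\<nu>. ((Fw_adj a b w) ^^ \<nu>) u n) \<longlonglongrightarrow> 0))"
proof -
  note anz = assms(3) and wnz = assms(5)
  define c where "c n = b n / a (Suc n)" for n
  define \<beta> where "\<beta> n = w n * a n / a (Suc n)" for n
  have q: "q > 0"
  proof (rule ccontr)
    assume "\<not> q > 0"
    hence "1 / q \<le> 0" by (simp add: not_less divide_nonpos_nonneg)
    hence "1 / p \<ge> 1" using assms(2) by linarith
    thus False using assms(1) by (simp add: field_simps)
  qed
  obtain r0 where r0: "limsup (\<lambda>n. ereal (norm (c n))) < ereal r0" "ereal r0 < 1"
    using ereal_dense2[OF assms(8)] unfolding c_def by blast
  have "eventually (\<lambda>n. ereal (norm (c n)) < ereal r0) sequentially"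
    by (rule Limsup_lessD[OF r0(1)])
  then obtain L where L0: "\<And>n. n \<ge> L \<Longrightarrow> norm (c n) < r0" unfolding eventually_sequentially by auto
  define r where "r = max r0 (1/2)"
  have r: "0 < r" "r < 1" using r0(2) unfolding r_def by auto
  have L: "n \<ge> L \<Longrightarrow> norm (c n) < r" for n using L0[of n] unfolding r_def by linarith
  define C0 where "C0 = (\<Prod>n<L. max 1 (norm (c n) / r))"
  have C0: "C0 \<ge> 0" unfolding C0_def by (intro prod_nonneg) auto
  have gb: "norm (gg c i k) \<le> C0 * r ^ k" for i k unfolding C0_def by (rule gg_bound_setup[OF r(1) L])
  define Cc where "Cc = r + (\<Sum>n<L. norm (c n))"
  have cb: "norm (c n) \<le> Cc" for n
  proof (cases "n \<ge> L")
    case True thus ?thesis using L[of n] unfolding Cc_def by (smt (verit) sum_nonneg norm_ge_zero)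
  next
    case False
    hence "norm (c n) \<le> (\<Sum>n<L. norm (c n))" by (intro member_le_sum[of n "{..<L}" "\<lambda>n. norm (c n)"]) auto
    thus ?thesis unfolding Cc_def using r by simp
  qed
  have Cc: "Cc \<ge> 0" unfolding Cc_def using r by (simp add: sum_nonneg)
  obtain M0 where M0: "\<And>n. norm (\<beta> n) \<le> M0"
    using assms(7) unfolding \<beta>_def bdd_above_def by auto
  define M where "M = max 1 M0"
  have bb: "norm (\<beta> n) \<le> M" for n using M0[of n] unfolding M_def by linarith
  have bne: "\<beta> n \<noteq> 0" for n unfolding \<beta>_def using anz wnz by simp
  interpret qs: qsetup c \<beta> q r C0 Cc M
    by unfold_locales (use q r C0 gb cb Cc bne bb in \<open>auto simp: M_def\<close>)
  have Teq: "Fw_adj a b w u = Pop c (Bop \<beta> (Qop c u))" if u: "in_lq q u" for u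
  proof -
    obtain V where V: "\<And>n. norm (u n) \<le> V" using qs.lq_bdd[OF u] by blast
    show ?thesis by (rule qs.T_eq[OF anz _ _ V]) (simp_all add: c_def \<beta>_def)
  qed
  interpret ts: tsetup c \<beta> q r C0 Cc M "Fw_adj a b w"
    by unfold_locales (rule Teq)
  show ?thesis
  proof
    assume nh: "\<not> hypercyclic_lq q (Fw_adj a b w)"
    show "\<forall>u. in_lq q u \<longrightarrow> (\<forall>n. (\<lambda>\<nu>. ((Fw_adj a b w) ^^ \<nu>) u n) \<longlonglongrightarrow> 0)"
    proof (rule ccontr)
      assume "\<not> (\<forall>u. in_lq q u \<longrightarrow> (\<forall>n. (\<lambda>\<nu>. ((Fw_adj a b w) ^^ \<nu>) u n) \<longlonglongrightarrow> 0))"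
      hence "\<And>K. \<exists>n. norm (qs.pr 0 n) > K" by (rule ts.unbounded)
      hence "hypercyclic_lq q (Fw_adj a b w)" by (rule ts.hyp_construct)
      thus False using nh by blast
    qed
  next
    assume "\<forall>u. in_lq q u \<longrightarrow> (\<forall>n. (\<lambda>\<nu>. ((Fw_adj a b w) ^^ \<nu>) u n) \<longlonglongrightarrow> 0)"
    thus "\<not> hypercyclic_lq q (Fw_adj a b w)" by (rule ts.dirB)
  qed
qed


end
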